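(* Let $E/F$ be an unramified quadratic extension of nonarchimedean local fields of characteristic $0$ and $\beta\in\mathrm{GL}_n(E)$ skew-Hermitian. Let $\gamma\in\mathrm{GL}_n(E)$ be normal and Kottwitz with $\bar\gamma\gamma$ regular semisimple, and let $\zeta\in\mathrm{GL}_n(E)$ be Kottwitz with respect to $\beta$. Then: (1) if $g\in\mathrm{GL}_n(E)$ and $g^{-1}\bar\gamma\gamma g\in\mathrm{GL}_n(\mathcal{O}_E)$, then $g^{-1}\gamma g\in\mathrm{GL}_n(\mathcal{O}_E)$; (2) if $g\in\mathrm{GL}_n(E)$ and $g^{-1}\gamma\bar g\in\mathrm{GL}_n(\mathcal{O}_E)$, then $g\in\mathrm{GL}_n(F)\mathrm{GL}_n(\mathcal{O}_E)$; (3) if $h\in\mathrm{U}_n^\beta(F)$ and $h^{-1}(\beta^{-1}\zeta^*\beta\zeta)h\in\mathrm{GL}_n(\mathcal{O}_E)$, then $h^{-1}\zeta h\in\mathrm{GL}_n(\mathcal{O}_E)$.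
   Context: $x\mapsto\bar x$ is the nontrivial automorphism of $E/F$ (applied entrywise), $g^*={}^t\bar g$; skew-Hermitian means $\beta^*=-\beta$, and $\mathrm{U}_n^\beta(F)=\{h\in\mathrm{GL}_n(E):h^*\beta h=\beta\}$. $\gamma$ is normal if $\bar\gamma\gamma\in\mathrm{GL}_n(F)$. $\gamma$ is Kottwitz if either $\gamma=c_{n-1}(\bar\gamma\gamma)^{n-1}+\dots+c_0$ for some $c_i\in\mathcal{O}_E$, or there is no $g\in\mathrm{GL}_n(E)$ with $g^{-1}\bar\gamma\gamma g\in\mathrm{GL}_n(\mathcal{O}_E)$. $\zeta$ is Kottwitz with respect to $\beta$ if either $\zeta=c_{n-1}(\beta^{-1}\zeta^*\beta\zeta)^{n-1}+\dots+c_0$ for some $c_i\in\mathcal{O}_E$, or there is no $h\in\mathrm{U}_n^\beta(F)$ with $h^{-1}(\beta^{-1}\zeta^*\beta\zeta)h\in\mathrm{GL}_n(\mathcal{O}_E)$. *)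

theory Defs
  imports "Jordan_Normal_Form.Matrix" "Jordan_Normal_Form.Char_Poly"
    "HOL-Computational_Algebra.Polynomial"
begin

text \<open>The field E is a type 'e of characteristic 0, equipped with a normalised
discrete valuation v (only its values on nonzero elements matter) and a field
automorphism sigma of order 2 (the nontrivial element of Gal(E/F));
F is the fixed field of sigma.\<close>

definition Ointeg :: "('e::field \<Rightarrow> int) \<Rightarrow> 'e set" where
  "Ointeg v = {x. x = 0 \<or> 0 \<le> v x}"

definition fixed_field :: "('e \<Rightarrow> 'e) \<Rightarrow> 'e set" where
  "fixed_field \<sigma> = {x. \<sigma> x = x}"

text \<open>v is a normalised (surjective onto the integers) discrete valuation on E,
E is complete for it, and the residue field O/m is finite
(given by a finite set of representatives).\<close>
definition nonarch_local_field :: "('e::field \<Rightarrow> int) \<Rightarrow> bool" where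
  "nonarch_local_field v \<longleftrightarrow>
     (\<forall>x y. x \<noteq> 0 \<longrightarrow> y \<noteq> 0 \<longrightarrow> v (x * y) = v x + v y) \<and>
     (\<forall>x y. x \<noteq> 0 \<longrightarrow> y \<noteq> 0 \<longrightarrow> x + y \<noteq> 0 \<longrightarrow> min (v x) (v y) \<le> v (x + y)) \<and>
     (\<forall>k. \<exists>x. x \<noteq> 0 \<and> v x = k) \<and>
     (\<forall>X :: nat \<Rightarrow> 'e.
        (\<forall>k. \<exists>N. \<forall>m\<ge>N. \<forall>l\<ge>N. X m = X l \<or> k \<le> v (X m - X l)) \<longrightarrow>
        (\<exists>L. \<forall>k. \<exists>N. \<forall>m\<ge>N. X m = L \<or> k \<le> v (X m - L))) \<and>
     (\<exists>S. finite S \<and> S \<subseteq> Ointeg v \<and>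
        (\<forall>x\<in>Ointeg v. \<exists>s\<in>S. x = s \<or> 1 \<le> v (x - s)))"

text \<open>E/F unramified quadratic, F the fixed field of the automorphism sigma of order 2,
sigma preserving the valuation, and a uniformiser of E lying in F (ramification index 1).\<close>
definition unram_quad_ext :: "('e::field_char_0 \<Rightarrow> int) \<Rightarrow> ('e \<Rightarrow> 'e) \<Rightarrow> bool" where
  "unram_quad_ext v \<sigma> \<longleftrightarrow>
     nonarch_local_field v \<and>
     (\<forall>x y. \<sigma> (x + y) = \<sigma> x + \<sigma> y) \<and>
     (\<forall>x y. \<sigma> (x * y) = \<sigma> x * \<sigma> y) \<and>
     (\<forall>x. \<sigma> (\<sigma> x) = x) \<and> (\<exists>x. \<sigma> x \<noteq> x) \<and>
     (\<forall>x. x \<noteq> 0 \<longrightarrow> v (\<sigma> x) = v x) \<and>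
     (\<exists>\<pi>\<in>fixed_field \<sigma>. \<pi> \<noteq> 0 \<and> v \<pi> = 1)"

definition minv :: "nat \<Rightarrow> 'e::field mat \<Rightarrow> 'e mat" where
  "minv n A = (SOME B. B \<in> carrier_mat n n \<and> A * B = 1\<^sub>m n \<and> B * A = 1\<^sub>m n)"

definition GL :: "nat \<Rightarrow> 'e::field mat set" where
  "GL n = {A. A \<in> carrier_mat n n \<and> invertible_mat A}"

definition GL_over :: "nat \<Rightarrow> 'e::field set \<Rightarrow> 'e mat set" where
  "GL_over n R = {A. A \<in> GL n \<and> (\<forall>i<n. \<forall>j<n. A $$ (i,j) \<in> R \<and> minv n A $$ (i,j) \<in> R)}"

definition mbar :: "('e \<Rightarrow> 'e) \<Rightarrow> 'e mat \<Rightarrow> 'e mat" where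
  "mbar \<sigma> A = map_mat \<sigma> A"

definition mstar :: "('e \<Rightarrow> 'e) \<Rightarrow> 'e mat \<Rightarrow> 'e mat" where
  "mstar \<sigma> A = transpose_mat (map_mat \<sigma> A)"

definition skew_hermitian :: "('e::field \<Rightarrow> 'e) \<Rightarrow> 'e mat \<Rightarrow> bool" where
  "skew_hermitian \<sigma> \<beta> \<longleftrightarrow> mstar \<sigma> \<beta> = - \<beta>"

definition unitary_group :: "nat \<Rightarrow> ('e::field \<Rightarrow> 'e) \<Rightarrow> 'e mat \<Rightarrow> 'e mat set" where
  "unitary_group n \<sigma> \<beta> = {h. h \<in> GL n \<and> mstar \<sigma> h * \<beta> * h = \<beta>}"

definition normal_mat :: "nat \<Rightarrow> ('e::field \<Rightarrow> 'e) \<Rightarrow> 'e mat \<Rightarrow> bool" where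
  "normal_mat n \<sigma> \<gamma> \<longleftrightarrow> mbar \<sigma> \<gamma> * \<gamma> \<in> GL_over n (fixed_field \<sigma>)"

definition mat_poly_eval :: "nat \<Rightarrow> (nat \<Rightarrow> 'e::comm_ring_1) \<Rightarrow> 'e mat \<Rightarrow> 'e mat" where
  "mat_poly_eval n c A = foldr (\<lambda>i M. c i \<cdot>\<^sub>m (A ^\<^sub>m i) + M) [0..<n] (0\<^sub>m n n)"

text \<open>Regular semisimple: the characteristic polynomial has n distinct roots in an
algebraic closure, i.e. it is separable.\<close>
definition regular_semisimple :: "'e::field mat \<Rightarrow> bool" where
  "regular_semisimple A \<longleftrightarrow> coprime (char_poly A) (pderiv (char_poly A))"

definition kottwitz :: "nat \<Rightarrow> ('e::field_char_0 \<Rightarrow> int) \<Rightarrow> ('e \<Rightarrow> 'e) \<Rightarrow> 'e mat \<Rightarrow> bool" where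
  "kottwitz n v \<sigma> \<gamma> \<longleftrightarrow>
     (\<exists>c. (\<forall>i<n. c i \<in> Ointeg v) \<and> \<gamma> = mat_poly_eval n c (mbar \<sigma> \<gamma> * \<gamma>)) \<or>
     \<not> (\<exists>g\<in>GL n. minv n g * (mbar \<sigma> \<gamma> * \<gamma>) * g \<in> GL_over n (Ointeg v))"

definition kottwitz_wrt :: "nat \<Rightarrow> ('e::field_char_0 \<Rightarrow> int) \<Rightarrow> ('e \<Rightarrow> 'e) \<Rightarrow> 'e mat \<Rightarrow> 'e mat \<Rightarrow> bool" where
  "kottwitz_wrt n v \<sigma> \<beta> \<zeta> \<longleftrightarrow>
     (let N = minv n \<beta> * mstar \<sigma> \<zeta> * \<beta> * \<zeta> in
     (\<exists>c. (\<forall>i<n. c i \<in> Ointeg v) \<and> \<zeta> = mat_poly_eval n c N) \<or>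
     \<not> (\<exists>h\<in>unitary_group n \<sigma> \<beta>. minv n h * N * h \<in> GL_over n (Ointeg v)))"

end

theory Submission
  imports Defs
begin

locale vset =
  fixes v :: "'e::field_char_0 \<Rightarrow> int" and \<sigma> :: "'e \<Rightarrow> 'e"
  assumes ext: "unram_quad_ext v \<sigma>"
begin

abbreviation "Oi \<equiv> Ointeg v"
definition mi :: "'e \<Rightarrow> bool" where "mi x \<longleftrightarrow> x = 0 \<or> 1 \<le> v x"
definition un :: "'e \<Rightarrow> bool" where "un x \<longleftrightarrow> x \<noteq> 0 \<and> v x = 0"

lemma nl: "nonarch_local_field v" using ext unfolding unram_quad_ext_def by auto
lemma vmul: "x \<noteq> 0 \<Longrightarrow> y \<noteq> 0 \<Longrightarrow> v (x*y) = v x + v y" using nl unfolding nonarch_local_field_def by blast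
lemma vadd: "x \<noteq> 0 \<Longrightarrow> y \<noteq> 0 \<Longrightarrow> x + y \<noteq> 0 \<Longrightarrow> min (v x) (v y) \<le> v (x+y)" using nl unfolding nonarch_local_field_def by blast
lemma v1: "v 1 = 0" using vmul[of 1 1] by simp
lemma vm1: "v (-1) = 0" using vmul[of "-1" "-1"] v1 by simp
lemma vneg: "v (-x) = v x" if "x \<noteq> 0" using vmul[of "-1" x] vm1 that by simp
lemma vinv: "x \<noteq> 0 \<Longrightarrow> v (inverse x) = - v x" using vmul[of x "inverse x"] v1 by simp

lemma O_0[simp]: "0 \<in> Oi" and O_1[simp]: "1 \<in> Oi" unfolding Ointeg_def by (auto simp: v1)
lemma O_add[intro]: "x \<in> Oi \<Longrightarrow> y \<in> Oi \<Longrightarrow> x + y \<in> Oi"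
  unfolding Ointeg_def using vadd[of x y] by (cases "x = 0"; cases "y = 0"; cases "x+y=0"; force)
lemma O_mult[intro]: "x \<in> Oi \<Longrightarrow> y \<in> Oi \<Longrightarrow> x * y \<in> Oi"
  unfolding Ointeg_def using vmul[of x y] by (cases "x = 0"; cases "y = 0"; auto)
lemma O_uminus[intro]: "x \<in> Oi \<Longrightarrow> - x \<in> Oi"
  unfolding Ointeg_def using vneg[of x] by (cases "x = 0"; auto)
lemma O_minus[intro]: "x \<in> Oi \<Longrightarrow> y \<in> Oi \<Longrightarrow> x - y \<in> Oi"
  using O_add[of x "-y"] O_uminus[of y] by simp
lemma O_m1[simp]: "-1 \<in> Oi" by auto
lemma O_of_int[simp]: "of_int k \<in> Oi"
proof (induct k rule: int_induct[where k=0])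
  case base then show ?case by simp
next
  case (step1 i) then show ?case by (auto simp: O_add)
next
  case (step2 i) then show ?case using O_minus[of "of_int i" 1] by simp
qed
lemma O_sum: "(\<And>x. x \<in> S \<Longrightarrow> f x \<in> Oi) \<Longrightarrow> sum f S \<in> Oi"
  by (induct S rule: infinite_finite_induct) auto
lemma O_prod: "(\<And>x. x \<in> S \<Longrightarrow> f x \<in> Oi) \<Longrightarrow> prod f S \<in> Oi"
  by (induct S rule: infinite_finite_induct) auto
lemma O_pow: "x \<in> Oi \<Longrightarrow> x ^ k \<in> Oi" by (induct k) auto

lemma O_cases: "x \<in> Oi \<Longrightarrow> mi x \<or> un x" unfolding Ointeg_def mi_def un_def by auto
lemma mi_O: "mi x \<Longrightarrow> x \<in> Oi" unfolding Ointeg_def mi_def by auto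
lemma un_O: "un x \<Longrightarrow> x \<in> Oi" unfolding Ointeg_def un_def by auto
lemma mi_un: "mi x \<Longrightarrow> \<not> un x" unfolding mi_def un_def by auto
lemma mi_add: "mi x \<Longrightarrow> mi y \<Longrightarrow> mi (x+y)"
  unfolding mi_def using vadd[of x y] by (cases "x = 0"; cases "y = 0"; cases "x+y=0"; force)
lemma mi_mult: "mi x \<Longrightarrow> y \<in> Oi \<Longrightarrow> mi (x*y)"
  unfolding mi_def Ointeg_def using vmul[of x y] by (cases "x = 0"; cases "y = 0"; auto)
lemma mi_uminus: "mi x \<Longrightarrow> mi (-x)" unfolding mi_def using vneg[of x] by (cases "x = 0"; auto)
lemma un_mult: "un x \<Longrightarrow> un y \<Longrightarrow> un (x*y)" unfolding un_def using vmul[of x y] by auto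
lemma un_inverse: "un x \<Longrightarrow> un (inverse x)" unfolding un_def using vinv[of x] by auto
lemma un_uminus: "un x \<Longrightarrow> un (-x)" unfolding un_def using vneg[of x] by auto
lemma un_1[simp]: "un 1" unfolding un_def by (simp add: v1)
lemma un_pow: "un x \<Longrightarrow> un (x ^ k)" by (induct k) (auto intro: un_mult)
lemma un_add_split: "x \<in> Oi \<Longrightarrow> y \<in> Oi \<Longrightarrow> un (x+y) \<Longrightarrow> un x \<or> un y"
  using O_cases[of x] O_cases[of y] mi_add[of x y] mi_un by blast
lemma un_mult_split: "x \<in> Oi \<Longrightarrow> y \<in> Oi \<Longrightarrow> un (x*y) \<Longrightarrow> un x"
  using O_cases[of x] mi_mult[of x y] mi_un by blast
lemma un_prod_O: "x \<in> Oi \<Longrightarrow> y \<in> Oi \<Longrightarrow> x * y = 1 \<Longrightarrow> un x"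
  using un_mult_split[of x y] by simp

lemma s_add: "\<sigma> (x+y) = \<sigma> x + \<sigma> y" and s_mult: "\<sigma> (x*y) = \<sigma> x * \<sigma> y"
  and s_s[simp]: "\<sigma> (\<sigma> x) = x" using ext unfolding unram_quad_ext_def by auto
lemma s_v: "x \<noteq> 0 \<Longrightarrow> v (\<sigma> x) = v x" using ext unfolding unram_quad_ext_def by auto
lemma s_0[simp]: "\<sigma> 0 = 0" using s_add[of 0 0] by simp
lemma s_1[simp]: "\<sigma> 1 = 1"
  using s_mult[of 1 "\<sigma> 1"] by simp

sublocale sh: field_hom \<sigma>
  by (unfold_locales) (auto simp: s_add s_mult)

lemma s_ne0: "x \<noteq> 0 \<Longrightarrow> \<sigma> x \<noteq> 0" by (metis s_0 s_s)
lemma s_O: "x \<in> Oi \<Longrightarrow> \<sigma> x \<in> Oi" unfolding Ointeg_def using s_v[of x] s_ne0 by (cases "x = 0"; auto)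
lemma s_mi: "mi x \<Longrightarrow> mi (\<sigma> x)" unfolding mi_def using s_v[of x] s_ne0 by (cases "x = 0"; auto)
lemma s_un: "un x \<Longrightarrow> un (\<sigma> x)" unfolding un_def using s_v s_ne0 by auto

lemma unif: "\<exists>\<pi>. \<sigma> \<pi> = \<pi> \<and> \<pi> \<noteq> 0 \<and> v \<pi> = 1"
  using ext unfolding unram_quad_ext_def fixed_field_def by auto

end

context vset begin

definition intm :: "nat \<Rightarrow> 'e mat \<Rightarrow> bool" where
  "intm n A \<longleftrightarrow> A \<in> carrier_mat n n \<and> (\<forall>i<n. \<forall>j<n. A $$ (i,j) \<in> Oi)"

lemma intm_carrier: "intm n A \<Longrightarrow> A \<in> carrier_mat n n" unfolding intm_def by auto
lemma intm_ent: "intm n A \<Longrightarrow> i < n \<Longrightarrow> j < n \<Longrightarrow> A $$ (i,j) \<in> Oi" unfolding intm_def by auto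

lemma int_det: assumes "intm n A" shows "det A \<in> Oi"
proof -
  have A: "A \<in> carrier_mat n n" using assms by (rule intm_carrier)
  show ?thesis unfolding det_def'[OF A]
  proof (rule O_sum)
    fix p assume "p \<in> {p. p permutes {0..<n}}"
    hence p: "p permutes {0..<n}" by simp
    have "(\<Prod>i = 0..<n. A $$ (i, p i)) \<in> Oi"
    proof (rule O_prod)
      fix i assume i: "i \<in> {0..<n}"
      hence "p i \<in> {0..<n}" using p by (simp add: permutes_in_image)
      thus "A $$ (i, p i) \<in> Oi" using i intm_ent[OF assms] by auto
    qed
    thus "signof p * (\<Prod>i = 0..<n. A $$ (i, p i)) \<in> Oi" by (intro O_mult) simp_all
  qed
qed

lemma int_mult: assumes "intm n A" "intm n B" shows "intm n (A * B)"
proof -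
  have A: "A \<in> carrier_mat n n" and B: "B \<in> carrier_mat n n" using assms intm_carrier by auto
  show ?thesis unfolding intm_def
  proof (intro conjI allI impI)
    show "A * B \<in> carrier_mat n n" using A B by auto
    fix i j assume i: "i < n" and j: "j < n"
    have "(A * B) $$ (i,j) = (\<Sum>k = 0..<n. A $$ (i,k) * B $$ (k,j))"
      using A B i j by (auto simp: scalar_prod_def intro!: sum.cong)
    also have "\<dots> \<in> Oi" using i j intm_ent[OF assms(1)] intm_ent[OF assms(2)] by (auto intro!: O_sum)
    finally show "(A * B) $$ (i,j) \<in> Oi" .
  qed
qed

lemma int_add: assumes "intm n A" "intm n B" shows "intm n (A + B)"
  using assms unfolding intm_def by (auto simp: O_add)

lemma int_one: "intm n (1\<^sub>m n)" unfolding intm_def by auto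
lemma int_zero: "intm n (0\<^sub>m n n)" unfolding intm_def by auto
lemma int_smult: "intm n A \<Longrightarrow> c \<in> Oi \<Longrightarrow> intm n (c \<cdot>\<^sub>m A)" unfolding intm_def by (auto simp: O_mult)
lemma int_pow: assumes "intm n A" shows "intm n (A ^\<^sub>m k)"
proof -
  have d: "dim_row A = n" using intm_carrier[OF assms] by auto
  show ?thesis by (induct k) (auto intro: int_mult int_one assms simp: d)
qed

lemma int_poly: assumes "intm n A" "\<forall>i<n. c i \<in> Oi" shows "intm n (mat_poly_eval n c A)"
proof -
  have "\<forall>i\<in>set xs. c i \<in> Oi \<Longrightarrow> intm n (foldr (\<lambda>i M. c i \<cdot>\<^sub>m (A ^\<^sub>m i) + M) xs (0\<^sub>m n n))" for xs
    by (induct xs) (auto intro!: int_add int_smult int_pow assms(1) int_zero)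
  thus ?thesis unfolding mat_poly_eval_def using assms(2) by auto
qed

lemma int_adj: assumes "intm n A" shows "intm n (adj_mat A)"
proof -
  have A: "A \<in> carrier_mat n n" using assms by (rule intm_carrier)
  show ?thesis unfolding intm_def
  proof (intro conjI allI impI)
    show "adj_mat A \<in> carrier_mat n n" using adj_mat(1)[OF A] .
    fix i j assume i: "i < n" and j: "j < n"
    have "adj_mat A $$ (i,j) = cofactor A j i" using A i j by (simp add: adj_mat_def)
    also have "\<dots> \<in> Oi" unfolding cofactor_def
    proof (intro O_mult O_pow O_m1 int_det)
      show "intm (n-1) (mat_delete A j i)" unfolding intm_def
        using A i j by (auto simp: mat_delete_def intro!: intm_ent[OF assms])
    qed
    finally show "adj_mat A $$ (i,j) \<in> Oi" .
  qed
qed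

end

lemma inv_unique:
  fixes A B :: "'a::field mat"
  assumes A: "A \<in> carrier_mat n n" and B: "B \<in> carrier_mat n n" and AB: "A * B = 1\<^sub>m n"
  shows "A \<in> GL n" "minv n A = B"
proof -
  have BA: "B * A = 1\<^sub>m n" by (rule mat_mult_left_right_inverse[OF A B AB])
  have inv: "invertible_mat A" unfolding invertible_mat_def inverts_mat_def
    using A B AB BA by (auto intro!: exI[of _ B])
  thus "A \<in> GL n" unfolding GL_def using A by auto
  have "\<exists>C. C \<in> carrier_mat n n \<and> A * C = 1\<^sub>m n \<and> C * A = 1\<^sub>m n" using B AB BA by auto
  from someI_ex[OF this] obtain C where C: "C \<in> carrier_mat n n" "A * C = 1\<^sub>m n" "C * A = 1\<^sub>m n"
    and Cd: "minv n A = C" unfolding minv_def by auto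
  have "C = C * (A * B)" using C B AB by auto
  also have "\<dots> = (C * A) * B" by (rule assoc_mult_mat[symmetric, OF C(1) A B])
  also have "\<dots> = B" using C B by auto
  finally show "minv n A = B" using Cd by simp
qed

lemma GL_D:
  fixes A :: "'a::field mat"
  assumes "A \<in> GL n"
  shows "A \<in> carrier_mat n n" "minv n A \<in> carrier_mat n n" "A * minv n A = 1\<^sub>m n"
    "minv n A * A = 1\<^sub>m n" "det A \<noteq> 0"
proof -
  show A: "A \<in> carrier_mat n n" using assms unfolding GL_def by auto
  from assms obtain B where AB: "A * B = 1\<^sub>m (dim_row A)" and BA: "B * A = 1\<^sub>m (dim_row B)"
    unfolding GL_def invertible_mat_def inverts_mat_def by auto
  have "dim_col B = n" using arg_cong[OF AB, of dim_col] A by simp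
  moreover have "dim_row B = n" using arg_cong[OF BA, of dim_col] A by simp
  ultimately have B: "B \<in> carrier_mat n n" by auto
  have AB': "A * B = 1\<^sub>m n" using AB A by simp
  have m: "minv n A = B" by (rule inv_unique(2)[OF A B AB'])
  show "minv n A \<in> carrier_mat n n" "A * minv n A = 1\<^sub>m n" "minv n A * A = 1\<^sub>m n"
    using m B AB' mat_mult_left_right_inverse[OF A B AB'] by auto
  have "det A * det B = 1" using det_mult[OF A B] AB' by simp
  thus "det A \<noteq> 0" by auto
qed

lemma det_GL:
  fixes A :: "'a::field mat"
  assumes A: "A \<in> carrier_mat n n" and d: "det A \<noteq> 0"
  shows "A \<in> GL n" "minv n A = inverse (det A) \<cdot>\<^sub>m adj_mat A"
proof -
  have "A * (inverse (det A) \<cdot>\<^sub>m adj_mat A) = inverse (det A) \<cdot>\<^sub>m (A * adj_mat A)"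
    using A adj_mat(1)[OF A] by (simp add: mult_smult_distrib)
  also have "\<dots> = 1\<^sub>m n" using adj_mat(2)[OF A] d by (auto intro!: eq_matI)
  finally have e: "A * (inverse (det A) \<cdot>\<^sub>m adj_mat A) = 1\<^sub>m n" .
  have c: "inverse (det A) \<cdot>\<^sub>m adj_mat A \<in> carrier_mat n n" using adj_mat(1)[OF A] by simp
  show "A \<in> GL n" "minv n A = inverse (det A) \<cdot>\<^sub>m adj_mat A" using inv_unique[OF A c e] by auto
qed

lemma minv_GL:
  fixes A :: "'a::field mat"
  assumes "A \<in> GL n" shows "minv n A \<in> GL n" "minv n (minv n A) = A"
  using inv_unique[OF GL_D(2)[OF assms] GL_D(1)[OF assms] GL_D(4)[OF assms]] by auto

lemma det_minv:
  fixes A :: "'a::field mat"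
  assumes "A \<in> GL n" shows "det (minv n A) = inverse (det A)"
proof -
  have "det A * det (minv n A) = 1" using det_mult[OF GL_D(1,2)[OF assms]] GL_D(3)[OF assms] by simp
  thus ?thesis using GL_D(5)[OF assms] by (simp add: field_simps)
qed

lemma GL_mult:
  fixes A B :: "'a::field mat"
  assumes "A \<in> GL n" "B \<in> GL n" shows "A * B \<in> GL n" "minv n (A * B) = minv n B * minv n A"
proof -
  note a = GL_D[OF assms(1)] and b = GL_D[OF assms(2)]
  have "(A * B) * (minv n B * minv n A) = A * (B * (minv n B * minv n A))"
    by (rule assoc_mult_mat[of A n n B n _ n]) (use a b in auto)
  also have "B * (minv n B * minv n A) = (B * minv n B) * minv n A"
    by (rule assoc_mult_mat[symmetric, of B n n "minv n B" n "minv n A" n]) (use a b in auto)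
  also have "\<dots> = minv n A" using a b by simp
  also have "A * minv n A = 1\<^sub>m n" using a by simp
  finally have e: "(A * B) * (minv n B * minv n A) = 1\<^sub>m n" .
  show "A * B \<in> GL n" "minv n (A * B) = minv n B * minv n A"
    using inv_unique[OF _ _ e] a b by auto
qed

context vset begin

lemma GLO_iff: "A \<in> GL_over n Oi \<longleftrightarrow> intm n A \<and> un (det A)"
proof
  assume a: "A \<in> GL_over n Oi"
  hence G: "A \<in> GL n" and i1: "intm n A" and i2: "intm n (minv n A)"
    unfolding GL_over_def intm_def using GL_D by auto
  have "det A * det (minv n A) = 1" using det_mult[OF GL_D(1,2)[OF G]] GL_D(3)[OF G] by simp
  thus "intm n A \<and> un (det A)" using i1 un_prod_O[OF int_det[OF i1] int_det[OF i2]] by auto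
next
  assume a: "intm n A \<and> un (det A)"
  hence A: "A \<in> carrier_mat n n" and d: "det A \<noteq> 0" unfolding intm_def un_def by auto
  note g = det_GL[OF A d]
  have "intm n (minv n A)" unfolding g(2)
    by (intro int_smult int_adj un_O un_inverse) (use a in auto)
  thus "A \<in> GL_over n Oi" using g(1) a unfolding GL_over_def intm_def by auto
qed

lemma GLO_GL: "A \<in> GL_over n Oi \<Longrightarrow> A \<in> GL n" unfolding GL_over_def by auto

lemma GLO_mult: "A \<in> GL_over n Oi \<Longrightarrow> B \<in> GL_over n Oi \<Longrightarrow> A * B \<in> GL_over n Oi"
  unfolding GLO_iff using det_mult[of A n B] by (metis int_mult un_mult intm_carrier)

lemma GLO_minv: assumes "A \<in> GL_over n Oi" shows "minv n A \<in> GL_over n Oi"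
proof -
  have G: "A \<in> GL n" using assms GLO_GL by auto
  have "intm n (minv n A)" using assms GL_D(2)[OF G] unfolding GL_over_def intm_def by auto
  moreover have "un (det (minv n A))" using det_minv[OF G] un_inverse assms unfolding GLO_iff by auto
  ultimately show ?thesis unfolding GLO_iff by auto
qed

lemma mbar_carrier: "A \<in> carrier_mat n m \<Longrightarrow> mbar \<sigma> A \<in> carrier_mat n m" unfolding mbar_def by auto
lemma mbar_mult: "A \<in> carrier_mat n k \<Longrightarrow> B \<in> carrier_mat k m \<Longrightarrow> mbar \<sigma> (A * B) = mbar \<sigma> A * mbar \<sigma> B"
  unfolding mbar_def by (rule sh.mat_hom_mult)
lemma mbar_one: "mbar \<sigma> (1\<^sub>m n) = 1\<^sub>m n" unfolding mbar_def by (rule sh.mat_hom_one)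
lemma mbar_mbar[simp]: "mbar \<sigma> (mbar \<sigma> A) = A" unfolding mbar_def by (rule eq_matI) auto
lemma mbar_det: "det (mbar \<sigma> A) = \<sigma> (det A)" unfolding mbar_def by (rule sh.hom_det)
lemma mbar_GL: assumes "A \<in> GL n" shows "mbar \<sigma> A \<in> GL n" "minv n (mbar \<sigma> A) = mbar \<sigma> (minv n A)"
proof -
  note a = GL_D[OF assms]
  have "mbar \<sigma> A * mbar \<sigma> (minv n A) = 1\<^sub>m n" using mbar_mult[OF a(1,2)] a(3) mbar_one by simp
  from inv_unique[OF mbar_carrier[OF a(1)] mbar_carrier[OF a(2)] this]
  show "mbar \<sigma> A \<in> GL n" "minv n (mbar \<sigma> A) = mbar \<sigma> (minv n A)" by auto
qed
lemma mbar_int: "intm n A \<Longrightarrow> intm n (mbar \<sigma> A)" unfolding intm_def mbar_def by (auto simp: s_O)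
lemma mbar_GLO: "A \<in> GL_over n Oi \<Longrightarrow> mbar \<sigma> A \<in> GL_over n Oi"
  unfolding GLO_iff mbar_det by (auto intro: mbar_int s_un)

end

lemma GL_cancel:
  fixes A X :: "'a::field mat"
  assumes "A \<in> GL n" "X \<in> carrier_mat n m"
  shows "A * (minv n A * X) = X" "minv n A * (A * X) = X"
proof -
  note a = GL_D[OF assms(1)]
  have "A * (minv n A * X) = (A * minv n A) * X" by (rule assoc_mult_mat[symmetric]) (use a assms(2) in auto)
  also have "\<dots> = 1\<^sub>m n * X" by (simp only: a(3))
  finally show "A * (minv n A * X) = X" using assms(2) by simp
  have "minv n A * (A * X) = (minv n A * A) * X" by (rule assoc_mult_mat[symmetric]) (use a assms(2) in auto)
  also have "\<dots> = 1\<^sub>m n * X" by (simp only: a(4))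
  finally show "minv n A * (A * X) = X" using assms(2) by simp
qed

lemma conj_pow:
  fixes A h :: "'a::field mat"
  assumes h: "h \<in> GL n" and A: "A \<in> carrier_mat n n"
  shows "minv n h * (A ^\<^sub>m k) * h = (minv n h * A * h) ^\<^sub>m k"
proof -
  note a = GL_D[OF h]
  have "similar_mat_wit (minv n h * A * h) A (minv n h) h"
    unfolding similar_mat_wit_def Let_def using a A by auto
  from similar_mat_wit_pow_id[OF this, of k] show ?thesis by simp
qed

lemma conj_poly:
  fixes A h :: "'a::field mat"
  assumes h: "h \<in> GL n" and A: "A \<in> carrier_mat n n"
  shows "minv n h * mat_poly_eval n c A * h = mat_poly_eval n c (minv n h * A * h)"
proof -
  note a = GL_D[OF h]
  let ?B = "minv n h * A * h"
  have B: "?B \<in> carrier_mat n n" using a A by auto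
  have "minv n h * foldr (\<lambda>i M. c i \<cdot>\<^sub>m (A ^\<^sub>m i) + M) xs (0\<^sub>m n n) * h
      = foldr (\<lambda>i M. c i \<cdot>\<^sub>m (?B ^\<^sub>m i) + M) xs (0\<^sub>m n n)
    \<and> foldr (\<lambda>i M. c i \<cdot>\<^sub>m (A ^\<^sub>m i) + M) xs (0\<^sub>m n n) \<in> carrier_mat n n" for xs
  proof (induct xs)
    case Nil then show ?case using a by simp
  next
    case (Cons i xs)
    let ?M = "foldr (\<lambda>i M. c i \<cdot>\<^sub>m (A ^\<^sub>m i) + M) xs (0\<^sub>m n n)"
    have M: "?M \<in> carrier_mat n n" using Cons by simp
    have P: "A ^\<^sub>m i \<in> carrier_mat n n" using A by simp
    have e1: "minv n h * (c i \<cdot>\<^sub>m (A ^\<^sub>m i) + ?M)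
        = minv n h * (c i \<cdot>\<^sub>m (A ^\<^sub>m i)) + minv n h * ?M"
      by (rule mult_add_distrib_mat) (use a M P in auto)
    have e2: "(minv n h * (c i \<cdot>\<^sub>m (A ^\<^sub>m i)) + minv n h * ?M) * h
       = minv n h * (c i \<cdot>\<^sub>m (A ^\<^sub>m i)) * h + minv n h * ?M * h"
      by (rule add_mult_distrib_mat) (use a M P in auto)
    have e3: "minv n h * (c i \<cdot>\<^sub>m (A ^\<^sub>m i)) = c i \<cdot>\<^sub>m (minv n h * (A ^\<^sub>m i))"
      by (rule mult_smult_distrib) (use a P in auto)
    have e4: "(c i \<cdot>\<^sub>m (minv n h * (A ^\<^sub>m i))) * h = c i \<cdot>\<^sub>m (minv n h * (A ^\<^sub>m i) * h)"
      by (rule mult_smult_assoc_mat[of _ n n]) (use a P in auto)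
    have e5: "minv n h * (A ^\<^sub>m i) * h = ?B ^\<^sub>m i" by (rule conj_pow[OF h A])
    have "minv n h * (c i \<cdot>\<^sub>m (A ^\<^sub>m i) + ?M) * h = (minv n h * (c i \<cdot>\<^sub>m (A ^\<^sub>m i)) + minv n h * ?M) * h"
      by (simp only: e1)
    also have "\<dots> = minv n h * (c i \<cdot>\<^sub>m (A ^\<^sub>m i)) * h + minv n h * ?M * h" by (rule e2)
    also have "minv n h * (c i \<cdot>\<^sub>m (A ^\<^sub>m i)) * h = c i \<cdot>\<^sub>m (?B ^\<^sub>m i)"
      by (simp only: e3 e4 e5)
    finally have "minv n h * (c i \<cdot>\<^sub>m (A ^\<^sub>m i) + ?M) * h = c i \<cdot>\<^sub>m (?B ^\<^sub>m i) + minv n h * ?M * h" .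
    thus ?case using Cons M P by simp
  qed
  thus ?thesis unfolding mat_poly_eval_def by simp
qed

lemma det_conj:
  fixes A h :: "'a::field mat"
  assumes h: "h \<in> GL n" and A: "A \<in> carrier_mat n n"
  shows "det (minv n h * A * h) = det A"
proof -
  note a = GL_D[OF h]
  have "det (minv n h * A * h) = det (minv n h * A) * det h" by (rule det_mult) (use a A in auto)
  also have "det (minv n h * A) = det (minv n h) * det A" by (rule det_mult) (use a A in auto)
  finally have "det (minv n h * A * h) = det (minv n h) * det A * det h" .
  thus ?thesis using det_minv[OF h] a(5) by (simp add: field_simps)
qed

context vset begin

lemma un_norm: "un (\<sigma> x * x) \<Longrightarrow> un x"
  unfolding un_def using vmul[of "\<sigma> x" x] s_v[of x] s_ne0[of x] by (cases "x = 0") auto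

lemma part_poly:
  assumes G: "\<gamma> \<in> GL n" and N: "N \<in> carrier_mat n n" and dN: "det N = \<sigma> (det \<gamma>) * det \<gamma>"
    and K: "(\<exists>c. (\<forall>i<n. c i \<in> Oi) \<and> \<gamma> = mat_poly_eval n c N)"
    and g: "g \<in> GL n" and c: "minv n g * N * g \<in> GL_over n Oi"
  shows "minv n g * \<gamma> * g \<in> GL_over n Oi"
proof -
  obtain c where c1: "\<forall>i<n. c i \<in> Oi" and c2: "\<gamma> = mat_poly_eval n c N" using K by auto
  have e: "minv n g * \<gamma> * g = mat_poly_eval n c (minv n g * N * g)"
    unfolding c2 by (rule conj_poly[OF g N])
  have ci: "intm n (minv n g * N * g)" and cu: "un (det (minv n g * N * g))" using c unfolding GLO_iff by auto
  have i: "intm n (minv n g * \<gamma> * g)" unfolding e by (rule int_poly[OF ci c1])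
  have "un (det N)" using cu det_conj[OF g N] by simp
  hence "un (det \<gamma>)" using dN un_norm by metis
  hence "un (det (minv n g * \<gamma> * g))" using det_conj[OF g GL_D(1)[OF G]] by simp
  thus ?thesis using i unfolding GLO_iff by simp
qed

lemma part1:
  assumes G: "\<gamma> \<in> GL n" and K: "kottwitz n v \<sigma> \<gamma>"
    and g: "g \<in> GL n" and c: "minv n g * (mbar \<sigma> \<gamma> * \<gamma>) * g \<in> GL_over n Oi"
  shows "minv n g * \<gamma> * g \<in> GL_over n Oi"
proof (rule part_poly[OF G _ _ _ g c])
  note a = GL_D[OF G]
  show "mbar \<sigma> \<gamma> * \<gamma> \<in> carrier_mat n n" by (rule mult_carrier_mat[OF mbar_carrier[OF a(1)] a(1)])
  show "det (mbar \<sigma> \<gamma> * \<gamma>) = \<sigma> (det \<gamma>) * det \<gamma>" using det_mult[OF mbar_carrier[OF a(1)] a(1)] mbar_det by simp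
  show "\<exists>c. (\<forall>i<n. c i \<in> Oi) \<and> \<gamma> = mat_poly_eval n c (mbar \<sigma> \<gamma> * \<gamma>)"
    using K g c unfolding kottwitz_def by blast
qed

lemma mstar_carrier: "A \<in> carrier_mat n n \<Longrightarrow> mstar \<sigma> A \<in> carrier_mat n n" unfolding mstar_def by auto
lemma mstar_det: "A \<in> carrier_mat n n \<Longrightarrow> det (mstar \<sigma> A) = \<sigma> (det A)"
  unfolding mstar_def using det_transpose[of "map_mat \<sigma> A" n] sh.hom_det by auto

lemma part3:
  assumes B: "\<beta> \<in> GL n" and Z: "\<zeta> \<in> GL n" and K: "kottwitz_wrt n v \<sigma> \<beta> \<zeta>"
    and h: "h \<in> unitary_group n \<sigma> \<beta>"
    and c: "minv n h * (minv n \<beta> * mstar \<sigma> \<zeta> * \<beta> * \<zeta>) * h \<in> GL_over n Oi"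
  shows "minv n h * \<zeta> * h \<in> GL_over n Oi"
proof (rule part_poly[OF Z _ _ _ _ c])
  note b = GL_D[OF B] and z = GL_D[OF Z]
  show "h \<in> GL n" using h unfolding unitary_group_def by auto
  show "minv n \<beta> * mstar \<sigma> \<zeta> * \<beta> * \<zeta> \<in> carrier_mat n n" using b z mstar_carrier by auto
  have ms: "mstar \<sigma> \<zeta> \<in> carrier_mat n n" using mstar_carrier[OF z(1)] .
  have "det (minv n \<beta> * mstar \<sigma> \<zeta> * \<beta> * \<zeta>) = det (minv n \<beta> * mstar \<sigma> \<zeta> * \<beta>) * det \<zeta>"
    by (rule det_mult) (use b z ms in auto)
  also have "det (minv n \<beta> * mstar \<sigma> \<zeta> * \<beta>) = det (minv n \<beta> * mstar \<sigma> \<zeta>) * det \<beta>"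
    by (rule det_mult) (use b z ms in auto)
  also have "det (minv n \<beta> * mstar \<sigma> \<zeta>) = det (minv n \<beta>) * det (mstar \<sigma> \<zeta>)"
    by (rule det_mult) (use b z ms in auto)
  finally have "det (minv n \<beta> * mstar \<sigma> \<zeta> * \<beta> * \<zeta>) = det (minv n \<beta>) * \<sigma> (det \<zeta>) * det \<beta> * det \<zeta>"
    using mstar_det[OF z(1)] by simp
  thus "det (minv n \<beta> * mstar \<sigma> \<zeta> * \<beta> * \<zeta>) = \<sigma> (det \<zeta>) * det \<zeta>"
    using det_minv[OF B] b(5) by (simp add: field_simps)
  show "\<exists>c. (\<forall>i<n. c i \<in> Oi) \<and> \<zeta> = mat_poly_eval n c (minv n \<beta> * mstar \<sigma> \<zeta> * \<beta> * \<zeta>)"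
    using K h c unfolding kottwitz_wrt_def Let_def by blast
qed

end

definition mc :: "nat \<Rightarrow> (nat \<Rightarrow> nat \<Rightarrow> 'a) \<Rightarrow> 'a mat" where
  "mc n F = mat n n (\<lambda>(i,j). F j i)"

lemma det_row_smult:
  fixes X :: "'a::comm_ring_1 vec"
  assumes k: "k < n" and X: "X \<in> carrier_vec n" and c: "\<forall>j<n. c j \<in> carrier_vec n"
  shows "det (mat\<^sub>r n n (\<lambda>j. if j = k then a \<cdot>\<^sub>v X else c j))
       = a * det (mat\<^sub>r n n (\<lambda>j. if j = k then X else c j))"
proof -
  have "mat\<^sub>r n n (\<lambda>j. if j = k then a \<cdot>\<^sub>v X else c j)
      = mat\<^sub>r n n (\<lambda>j. (if j = k then a else 1) \<cdot>\<^sub>v (if j = k then X else c j))"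
    by (intro arg_cong[where f="mat\<^sub>r n n"] ext) auto
  also have "det \<dots> = prod (\<lambda>j. if j = k then a else 1) {0..<n} * det (mat\<^sub>r n n (\<lambda>j. if j = k then X else c j))"
    by (rule det_rows_mul) (use X c in auto)
  also have "prod (\<lambda>j. if j = k then a else 1) {0..<n} = a" using k by (simp add: prod.delta)
  finally show ?thesis .
qed

lemma det_mc_lin:
  fixes F :: "nat \<Rightarrow> nat \<Rightarrow> 'a::comm_ring_1"
  assumes k: "k < n"
  shows "det (mc n (F(k := (\<lambda>i. a * U i + b * W i))))
       = a * det (mc n (F(k := U))) + b * det (mc n (F(k := W)))"
proof -
  define R where "R G = mat\<^sub>r n n (\<lambda>j. vec n (G j))" for G :: "nat \<Rightarrow> nat \<Rightarrow> 'a"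
  have dm: "det (mc n G) = det (R G)" for G
  proof -
    have "transpose_mat (mc n G) = R G" unfolding R_def mc_def by (rule eq_matI) auto
    thus ?thesis using det_transpose[of "mc n G" n] unfolding mc_def by auto
  qed
  let ?c = "\<lambda>j. vec n (F j)"
  have c: "\<forall>j<n. ?c j \<in> carrier_vec n" by auto
  have "R (F(k := (\<lambda>i. a * U i + b * W i)))
      = mat\<^sub>r n n (\<lambda>j. if j = k then (a \<cdot>\<^sub>v vec n U) + (b \<cdot>\<^sub>v vec n W) else ?c j)"
    unfolding R_def by (intro arg_cong[where f="mat\<^sub>r n n"] ext) (auto intro!: eq_vecI)
  also have "det \<dots> = det (mat\<^sub>r n n (\<lambda>j. if j = k then a \<cdot>\<^sub>v vec n U else ?c j))
     + det (mat\<^sub>r n n (\<lambda>j. if j = k then b \<cdot>\<^sub>v vec n W else ?c j))"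
    by (rule det_row_add[of "\<lambda>_. a \<cdot>\<^sub>v vec n U" k n "\<lambda>_. b \<cdot>\<^sub>v vec n W"]) (use k in auto)
  also have "det (mat\<^sub>r n n (\<lambda>j. if j = k then a \<cdot>\<^sub>v vec n U else ?c j))
      = a * det (mat\<^sub>r n n (\<lambda>j. if j = k then vec n U else ?c j))"
    by (rule det_row_smult[OF k]) auto
  also have "det (mat\<^sub>r n n (\<lambda>j. if j = k then b \<cdot>\<^sub>v vec n W else ?c j))
      = b * det (mat\<^sub>r n n (\<lambda>j. if j = k then vec n W else ?c j))"
    by (rule det_row_smult[OF k]) auto
  also have "mat\<^sub>r n n (\<lambda>j. if j = k then vec n U else ?c j) = R (F(k := U))"
    unfolding R_def by (intro arg_cong[where f="mat\<^sub>r n n"] ext) auto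
  also have "mat\<^sub>r n n (\<lambda>j. if j = k then vec n W else ?c j) = R (F(k := W))"
    unfolding R_def by (intro arg_cong[where f="mat\<^sub>r n n"] ext) auto
  finally show ?thesis unfolding dm .
qed

context vset begin

lemma mbar_add: "A \<in> carrier_mat n m \<Longrightarrow> B \<in> carrier_mat n m \<Longrightarrow> mbar \<sigma> (A + B) = mbar \<sigma> A + mbar \<sigma> B"
  unfolding mbar_def by (rule eq_matI) (auto simp: s_add)

lemma int_mc: "(\<And>i j. i < n \<Longrightarrow> j < n \<Longrightarrow> F j i \<in> Oi) \<Longrightarrow> intm n (mc n F)"
  unfolding intm_def mc_def by auto

lemma hilbert90:
  assumes al: "\<alpha> \<in> Oi" "un (\<alpha> - \<sigma> \<alpha>)" and c: "c \<in> GL_over n Oi" "c * mbar \<sigma> c = 1\<^sub>m n"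
  shows "\<exists>b \<in> GL_over n Oi. c * mbar \<sigma> b = b"
proof -
  have ci: "intm n c" using c(1) unfolding GLO_iff by auto
  have cC: "c \<in> carrier_mat n n" using intm_carrier[OF ci] .
  have cE: "\<And>i j. i < n \<Longrightarrow> j < n \<Longrightarrow> c $$ (i,j) \<in> Oi" using intm_ent[OF ci] .
  define xx where "xx \<epsilon> j = (if \<epsilon> j then \<alpha> else 1)" for \<epsilon> :: "nat \<Rightarrow> bool" and j
  define colb where "colb \<epsilon> j i = (if i = j then xx \<epsilon> j else 0) + c $$ (i,j) * \<sigma> (xx \<epsilon> j)" for \<epsilon> j i
  define D where "D = \<sigma> \<alpha> - \<alpha>"
  define dc where "dc j i = (if i = j then D else 0)" for j i :: nat
  have xxO: "xx \<epsilon> j \<in> Oi" "\<sigma> (xx \<epsilon> j) \<in> Oi" for \<epsilon> j unfolding xx_def using al s_O by auto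
  have uD: "un D" using un_uminus[OF al(2)] unfolding D_def by simp
  have DO: "D \<in> Oi" using un_O[OF uD] .
  have colbO: "colb \<epsilon> j i \<in> Oi" if "i < n" "j < n" for \<epsilon> i j
    unfolding colb_def using xxO cE that by (auto intro!: O_add O_mult)
  have dcO: "dc j i \<in> Oi" for i j unfolding dc_def using DO by auto
  have claim: "k \<le> n \<Longrightarrow> \<exists>\<epsilon>. un (det (mc n (\<lambda>j. if j < k then colb \<epsilon> j else dc j)))" for k
  proof (induct k)
    case 0
    have "mc n (\<lambda>j. if j < 0 then colb \<epsilon> j else dc j) = D \<cdot>\<^sub>m 1\<^sub>m n" for \<epsilon>
      unfolding mc_def dc_def by (rule eq_matI) auto
    thus ?case using un_pow[OF uD, of n] by auto
  next
    case (Suc k)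
    hence k: "k < n" by simp
    from Suc obtain \<epsilon> where e: "un (det (mc n (\<lambda>j. if j < k then colb \<epsilon> j else dc j)))" by auto
    define F where "F = (\<lambda>j. if j < k then colb \<epsilon> j else dc j)"
    define U where "U = colb (\<epsilon>(k := False)) k"
    define W where "W = colb (\<epsilon>(k := True)) k"
    have Fk: "F k = (\<lambda>i. \<sigma> \<alpha> * U i + (-1) * W i)"
      unfolding F_def U_def W_def colb_def xx_def dc_def D_def
      by (auto simp: algebra_simps intro!: ext)
    have FF: "F = F(k := (\<lambda>i. \<sigma> \<alpha> * U i + (-1) * W i))"
      using fun_upd_idem[of F k, OF Fk] by simp
    have "det (mc n F) = \<sigma> \<alpha> * det (mc n (F(k := U))) + (-1) * det (mc n (F(k := W)))"
      by (subst FF, rule det_mc_lin[OF k])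
    have d1O: "det (mc n (F(k := U))) \<in> Oi"
      by (intro int_det[of n] int_mc) (auto simp: F_def U_def colbO dcO)
    have d2O: "det (mc n (F(k := W))) \<in> Oi"
      by (intro int_det[of n] int_mc) (auto simp: F_def W_def colbO dcO)
    have "un (\<sigma> \<alpha> * det (mc n (F(k := U))) + (-1) * det (mc n (F(k := W))))"
      using e \<open>det (mc n F) = _\<close> unfolding F_def by simp
    hence "un (\<sigma> \<alpha> * det (mc n (F(k := U)))) \<or> un ((-1) * det (mc n (F(k := W))))"
      using d1O d2O s_O[OF al(1)] by (intro un_add_split) auto
    hence "un (det (mc n (F(k := U)))) \<or> un (det (mc n (F(k := W))))"
      using d1O d2O s_O[OF al(1)] un_mult_split[of "det (mc n (F(k := U)))" "\<sigma> \<alpha>"]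
        un_mult_split[of "det (mc n (F(k := W)))" "-1"] by (auto simp: mult.commute)
    thus ?case
    proof
      assume u: "un (det (mc n (F(k := U))))"
      have "F(k := U) = (\<lambda>j. if j < Suc k then colb (\<epsilon>(k := False)) j else dc j)"
        unfolding F_def U_def colb_def xx_def by (auto intro!: ext)
      thus ?case using u by metis
    next
      assume u: "un (det (mc n (F(k := W))))"
      have "F(k := W) = (\<lambda>j. if j < Suc k then colb (\<epsilon>(k := True)) j else dc j)"
        unfolding F_def W_def colb_def xx_def by (auto intro!: ext)
      thus ?case using u by metis
    qed
  qed
  obtain \<epsilon> where e: "un (det (mc n (\<lambda>j. if j < n then colb \<epsilon> j else dc j)))" using claim[of n] by auto
  define X where "X = mat n n (\<lambda>(i,j). if i = j then xx \<epsilon> j else 0)"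
  define b where "b = X + c * mbar \<sigma> X"
  have XC: "X \<in> carrier_mat n n" unfolding X_def by auto
  have Xi: "intm n X" unfolding intm_def X_def using xxO by auto
  have bC: "b \<in> carrier_mat n n" unfolding b_def using XC cC mbar_carrier[OF XC] by auto
  have bi: "intm n b" unfolding b_def by (intro int_add Xi int_mult ci mbar_int)
  have beq: "b = mc n (\<lambda>j. if j < n then colb \<epsilon> j else dc j)"
  proof (rule eq_matI)
    fix i j assume i: "i < dim_row (mc n (\<lambda>j. if j < n then colb \<epsilon> j else dc j))"
      and j: "j < dim_col (mc n (\<lambda>j. if j < n then colb \<epsilon> j else dc j))"
    hence i: "i < n" and j: "j < n" unfolding mc_def by auto
    have "(c * mbar \<sigma> X) $$ (i,j) = (\<Sum>k = 0..<n. c $$ (i,k) * (if k = j then \<sigma> (xx \<epsilon> j) else 0))"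
      using i j cC XC unfolding mbar_def X_def
      by (auto simp: scalar_prod_def intro!: sum.cong)
    also have "\<dots> = (\<Sum>k = 0..<n. (if k = j then c $$ (i,k) * \<sigma> (xx \<epsilon> j) else 0))"
      by (rule sum.cong) auto
    also have "\<dots> = c $$ (i,j) * \<sigma> (xx \<epsilon> j)" using j by (simp add: sum.delta)
    finally have "(c * mbar \<sigma> X) $$ (i,j) = c $$ (i,j) * \<sigma> (xx \<epsilon> j)" .
    moreover have "b $$ (i,j) = X $$ (i,j) + (c * mbar \<sigma> X) $$ (i,j)"
      unfolding b_def using i j cC XC mbar_carrier[OF XC] by (subst index_add_mat) auto
    ultimately show "b $$ (i,j) = mc n (\<lambda>j. if j < n then colb \<epsilon> j else dc j) $$ (i,j)"
      unfolding mc_def colb_def using i j by (auto simp: X_def)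
  qed (use bC in \<open>auto simp: mc_def\<close>)
  have bG: "b \<in> GL_over n Oi" unfolding GLO_iff using bi e beq by simp
  have "mbar \<sigma> b = mbar \<sigma> X + mbar \<sigma> c * X"
    unfolding b_def using mbar_add[OF XC, of "c * mbar \<sigma> X"] mbar_mult[OF cC mbar_carrier[OF XC]]
      cC XC by (simp add: mbar_carrier)
  hence "c * mbar \<sigma> b = c * mbar \<sigma> X + c * (mbar \<sigma> c * X)"
    using cC XC mbar_carrier[OF XC] mbar_carrier[OF cC] by (simp add: mult_add_distrib_mat[of c n n])
  also have "c * (mbar \<sigma> c * X) = (c * mbar \<sigma> c) * X"
    by (rule assoc_mult_mat[symmetric]) (use cC XC mbar_carrier[OF cC] in auto)
  also have "\<dots> = X" using c(2) XC by simp
  also have "c * mbar \<sigma> X + X = b" unfolding b_def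
    by (rule comm_add_mat) (use cC XC mbar_carrier[OF XC] in auto)
  finally show ?thesis using bG by auto
qed

end

context vset begin

lemma mi_0[simp]: "mi 0" unfolding mi_def by simp
lemma mi_sub: "mi x \<Longrightarrow> mi y \<Longrightarrow> mi (x - y)" using mi_add[of x "-y"] mi_uminus[of y] by simp
lemma mi_trans: "mi (x - y) \<Longrightarrow> mi (y - z) \<Longrightarrow> mi (x - z)" using mi_add[of "x - y" "y - z"] by simp
lemma mi_sym: "mi (x - y) \<Longrightarrow> mi (y - x)" using mi_uminus[of "x - y"] by simp
lemma mi_sq: "mi (a * a) \<Longrightarrow> mi a"
  unfolding mi_def using vmul[of a a] by (cases "a = 0") auto
lemma mi_multl: "mi x \<Longrightarrow> y \<in> Oi \<Longrightarrow> mi (y * x)" using mi_mult[of x y] by (simp add: mult.commute)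

lemma vpow: "\<pi> \<noteq> 0 \<Longrightarrow> v (\<pi> ^ k) = int k * v \<pi>"
  by (induct k) (auto simp: v1 vmul algebra_simps)

lemma perfect:
  assumes m2: "mi 2" and N: "\<sigma> N = N" "N \<in> Oi"
  shows "\<exists>r. \<sigma> r = r \<and> r \<in> Oi \<and> mi (r * r - N)"
proof -
  obtain S where S: "finite S" "S \<subseteq> Oi" "\<forall>x\<in>Oi. \<exists>s\<in>S. x = s \<or> 1 \<le> v (x - s)"
    using nl unfolding nonarch_local_field_def by blast
  define rep where "rep x = (SOME s. s \<in> S \<and> mi (x - s))" for x
  have rep: "rep x \<in> S \<and> mi (x - rep x)" if "x \<in> Oi" for x
  proof -
    have "\<exists>s. s \<in> S \<and> mi (x - s)" using S(3) that unfolding mi_def by fastforce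
    from someI_ex[OF this] show ?thesis unfolding rep_def .
  qed
  have repc: "rep x = rep y" if "mi (x - y)" for x y
  proof -
    have "(\<lambda>s. s \<in> S \<and> mi (x - s)) = (\<lambda>s. s \<in> S \<and> mi (y - s))"
      using that mi_trans mi_sym by blast
    thus ?thesis unfolding rep_def by simp
  qed
  define F where "F = {x. \<sigma> x = x \<and> x \<in> Oi}"
  define T where "T = rep ` F"
  have fT: "finite T" unfolding T_def F_def using rep S(1) by (auto intro: finite_subset)
  define pick where "pick s = (SOME f. f \<in> F \<and> rep f = s)" for s
  have pick: "pick s \<in> F \<and> rep (pick s) = s" if "s \<in> T" for s
    using that unfolding T_def pick_def by (metis (mono_tags, lifting) image_iff someI_ex)
  have Fmult: "a * b \<in> F" if "a \<in> F" "b \<in> F" for a b using that unfolding F_def by (auto simp: s_mult)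
  define \<phi> where "\<phi> s = rep (pick s * pick s)" for s
  have into: "\<phi> ` T \<subseteq> T" unfolding \<phi>_def T_def using pick Fmult T_def by auto
  have inj: "inj_on \<phi> T"
  proof (rule inj_onI)
    fix s t assume s: "s \<in> T" and t: "t \<in> T" and e: "\<phi> s = \<phi> t"
    let ?a = "pick s" and ?b = "pick t"
    have aO: "?a \<in> Oi" and bO: "?b \<in> Oi" using pick s t unfolding F_def by auto
    have "mi (?a * ?a - rep (?a * ?a))" "mi (?b * ?b - rep (?b * ?b))" using rep aO bO by auto
    hence "mi (?a * ?a - ?b * ?b)" using e unfolding \<phi>_def using mi_trans mi_sym by metis
    moreover have "mi (2 * (?b * (?a - ?b)))" using m2 aO bO by (intro mi_mult) auto
    ultimately have "mi ((?a * ?a - ?b * ?b) - 2 * (?b * (?a - ?b)))" by (rule mi_sub)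
    moreover have "(?a * ?a - ?b * ?b) - 2 * (?b * (?a - ?b)) = (?a - ?b) * (?a - ?b)"
      by (simp add: algebra_simps)
    ultimately have "mi (?a - ?b)" using mi_sq by metis
    hence "rep ?a = rep ?b" by (rule repc)
    thus "s = t" using pick s t by metis
  qed
  have surj: "\<phi> ` T = T" by (rule endo_inj_surj[OF fT into inj])
  have NF: "N \<in> F" unfolding F_def using N by auto
  hence "rep N \<in> T" unfolding T_def by auto
  then obtain s where s: "s \<in> T" "\<phi> s = rep N" using surj by (metis imageE)
  let ?r = "pick s"
  have rF: "?r \<in> F" using pick s by auto
  have "mi (?r * ?r - rep (?r * ?r))" using rep Fmult[OF rF rF] unfolding F_def by auto
  moreover have "mi (N - rep N)" using rep N by auto
  ultimately have "mi (?r * ?r - N)" using s(2) unfolding \<phi>_def using mi_trans mi_sym by metis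
  thus ?thesis using rF unfolding F_def by auto
qed

lemma res_nontriv: "\<exists>x\<in>Oi. \<forall>f. \<sigma> f = f \<longrightarrow> f \<in> Oi \<longrightarrow> \<not> mi (x - f)"
proof (rule ccontr)
  assume "\<not> ?thesis"
  hence H: "\<forall>x\<in>Oi. \<exists>f. \<sigma> f = f \<and> f \<in> Oi \<and> mi (x - f)" by auto
  obtain \<pi> where p: "\<sigma> \<pi> = \<pi>" "\<pi> \<noteq> 0" "v \<pi> = 1" using unif by auto
  obtain y0 where y0: "\<sigma> y0 \<noteq> y0" using ext unfolding unram_quad_ext_def by auto
  have y00: "y0 \<noteq> 0" using y0 by auto
  define y where "y = y0 * \<pi> ^ nat (- v y0)"
  have pk: "\<pi> ^ k \<noteq> 0" "\<sigma> (\<pi> ^ k) = \<pi> ^ k" "v (\<pi> ^ k) = int k" for k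
    using p vpow[OF p(2), of k] by (auto simp: sh.hom_power)
  have yne: "\<sigma> y \<noteq> y" unfolding y_def using y0 pk by (auto simp: s_mult)
  have yO: "y \<in> Oi" unfolding y_def Ointeg_def using vmul[OF y00 pk(1)] pk(3) by auto
  have step: "\<exists>s z. \<sigma> s = s \<and> z \<in> Oi \<and> y = s + \<pi> ^ k * z" for k
  proof (induct k)
    case 0 show ?case using yO by (intro exI[of _ 0] exI[of _ y]) auto
  next
    case (Suc k)
    then obtain s z where sz: "\<sigma> s = s" "z \<in> Oi" "y = s + \<pi> ^ k * z" by auto
    obtain f where f: "\<sigma> f = f" "f \<in> Oi" "mi (z - f)" using H sz(2) by auto
    define z' where "z' = (z - f) * inverse \<pi>"
    have z'O: "z' \<in> Oi"
    proof (cases "z - f = 0")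
      case True thus ?thesis unfolding z'_def by simp
    next
      case False
      hence "1 \<le> v (z - f)" using f(3) unfolding mi_def by auto
      moreover have "v z' = v (z - f) - 1" unfolding z'_def
        using vmul[OF False, of "inverse \<pi>"] vinv[OF p(2)] p by simp
      ultimately show ?thesis unfolding Ointeg_def by auto
    qed
    have zz: "z = f + \<pi> * z'" unfolding z'_def using p(2) by (simp add: field_simps)
    have "y = (s + \<pi> ^ k * f) + \<pi> ^ Suc k * z'" using sz(3) zz by (simp add: algebra_simps)
    moreover have "\<sigma> (s + \<pi> ^ k * f) = s + \<pi> ^ k * f" using sz(1) f(1) pk(2) by (simp add: s_add s_mult)
    ultimately show ?case using z'O by blast
  qed
  define d where "d = \<sigma> y - y"
  have d0: "d \<noteq> 0" unfolding d_def using yne by auto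
  define K where "K = Suc (nat (v d))"
  obtain s z where sz: "\<sigma> s = s" "z \<in> Oi" "y = s + \<pi> ^ K * z" using step by blast
  have "d = \<pi> ^ K * (\<sigma> z - z)" unfolding d_def using sz pk(2)[of K]
    by (simp add: s_add s_mult algebra_simps)
  moreover have "\<sigma> z - z \<in> Oi" using sz(2) s_O by auto
  moreover have "\<sigma> z - z \<noteq> 0" using d0 calculation(1) by auto
  ultimately have "v d = int K + v (\<sigma> z - z)" "0 \<le> v (\<sigma> z - z)"
    using vmul[OF pk(1)[of K], of "\<sigma> z - z"] pk(3)[of K] unfolding Ointeg_def by auto
  thus False unfolding K_def by linarith
qed

lemma alpha_exists: "\<exists>\<alpha>. \<alpha> \<in> Oi \<and> un (\<alpha> - \<sigma> \<alpha>)"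
proof -
  obtain x where xO: "x \<in> Oi" and nf: "\<forall>f. \<sigma> f = f \<longrightarrow> f \<in> Oi \<longrightarrow> \<not> mi (x - f)"
    using res_nontriv by auto
  have sxO: "\<sigma> x \<in> Oi" using s_O[OF xO] .
  have dO: "x - \<sigma> x \<in> Oi" using xO sxO by auto
  have "un (x - \<sigma> x)"
  proof (rule ccontr)
    assume "\<not> un (x - \<sigma> x)"
    hence md: "mi (x - \<sigma> x)" using O_cases[OF dO] by auto
    have two: "(2::'e) \<in> Oi" using O_add[OF O_1 O_1] by (simp add: one_add_one)
    have s2: "\<sigma> 2 = 2" by (simp add: sh.hom_numeral)
    show False
    proof (cases "un (2::'e)")
      case True
      define f where "f = (x + \<sigma> x) * inverse 2"
      have "\<sigma> f = f" unfolding f_def s_mult sh.hom_inverse s2 s_add s_s by (simp add: add.commute)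
      moreover have "f \<in> Oi" unfolding f_def using xO sxO un_O[OF un_inverse[OF True]] by (intro O_mult O_add)
      moreover have "mi (x - f)"
      proof -
        have "x - f = (x - \<sigma> x) * inverse 2" unfolding f_def by (simp add: field_simps)
        thus ?thesis using mi_mult[OF md un_O[OF un_inverse[OF True]]] by metis
      qed
      ultimately show False using nf by auto
    next
      case False
      hence m2: "mi 2" using O_cases[OF two] by auto
      define N where "N = x * \<sigma> x"
      have sN: "\<sigma> (- N) = - N" unfolding N_def by (simp add: sh.hom_uminus s_mult mult.commute)
      have NO: "- N \<in> Oi" unfolding N_def using xO sxO by auto
      obtain r where r: "\<sigma> r = r" "r \<in> Oi" "mi (r * r - - N)" using perfect[OF m2 sN NO] by auto
      have mt: "mi (x + \<sigma> x)"
      proof -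
        have "mi (2 * x - (x - \<sigma> x))" using mi_sub[OF mi_mult[OF m2 xO] md] .
        thus ?thesis by (simp add: algebra_simps)
      qed
      have m1: "mi (x * x + N)" using mi_mult[OF mt xO] unfolding N_def by (simp add: algebra_simps)
      have m3: "mi (r * r + N)" using r(3) by simp
      have m4: "mi (2 * (N + x * r))" using m2 xO sxO r(2) unfolding N_def by (intro mi_mult) auto
      have "mi ((x * x + N) + (r * r + N) - 2 * (N + x * r))" using mi_sub[OF mi_add[OF m1 m3] m4] .
      moreover have "(x * x + N) + (r * r + N) - 2 * (N + x * r) = (x - r) * (x - r)"
        by (simp add: algebra_simps)
      ultimately have "mi (x - r)" using mi_sq by metis
      thus False using nf r by auto
    qed
  qed
  thus ?thesis using xO by auto
qed

end

context vset begin

lemma fixed_entry: "A \<in> carrier_mat n n \<Longrightarrow> mbar \<sigma> A = A \<Longrightarrow> i < n \<Longrightarrow> j < n \<Longrightarrow> A $$ (i,j) \<in> fixed_field \<sigma>"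
proof -
  assume A: "A \<in> carrier_mat n n" and f: "mbar \<sigma> A = A" and ij: "i < n" "j < n"
  have "\<sigma> (A $$ (i,j)) = mbar \<sigma> A $$ (i,j)" using A ij unfolding mbar_def by auto
  thus ?thesis using f unfolding fixed_field_def by simp
qed

lemma part2:
  assumes G: "\<gamma> \<in> GL n" and K: "kottwitz n v \<sigma> \<gamma>"
    and g: "g \<in> GL n" and k: "minv n g * \<gamma> * mbar \<sigma> g \<in> GL_over n Oi"
  shows "\<exists>a\<in>GL_over n (fixed_field \<sigma>). \<exists>b\<in>GL_over n Oi. g = a * b"
proof -
  define gb where "gb = mbar \<sigma> g"
  have gbG: "gb \<in> GL n" and mgb: "minv n gb = mbar \<sigma> (minv n g)" unfolding gb_def using mbar_GL[OF g] by auto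
  note gg = GL_D[OF g] and gbb = GL_D[OF gbG] and GG = GL_D[OF G]
  have gbar: "mbar \<sigma> gb = g" unfolding gb_def by simp
  have cbar: "mbar \<sigma> \<gamma> \<in> carrier_mat n n" using mbar_carrier[OF GG(1)] .
  define K1 where "K1 = minv n g * \<gamma> * gb"
  have kK: "K1 \<in> GL_over n Oi" using k unfolding K1_def gb_def .
  have "mbar \<sigma> K1 = mbar \<sigma> (minv n g * \<gamma>) * mbar \<sigma> gb" unfolding K1_def
    by (rule mbar_mult) (use gg GG gbb in auto)
  also have "mbar \<sigma> (minv n g * \<gamma>) = mbar \<sigma> (minv n g) * mbar \<sigma> \<gamma>"
    by (rule mbar_mult) (use gg GG in auto)
  finally have mK: "mbar \<sigma> K1 = minv n gb * mbar \<sigma> \<gamma> * g" unfolding mgb gbar .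
  have "mbar \<sigma> K1 * K1 = minv n gb * (mbar \<sigma> \<gamma> * \<gamma>) * gb"
  proof -
    have c1: "\<gamma> * gb \<in> carrier_mat n n" "mbar \<sigma> \<gamma> * g \<in> carrier_mat n n"
      "minv n g * (\<gamma> * gb) \<in> carrier_mat n n" "mbar \<sigma> \<gamma> * \<gamma> \<in> carrier_mat n n"
      using gg GG gbb cbar by auto
    have e1: "minv n gb * mbar \<sigma> \<gamma> * g = minv n gb * (mbar \<sigma> \<gamma> * g)"
      by (rule assoc_mult_mat[of _ n n _ n _ n]) (use gbb cbar gg in auto)
    have e2: "minv n g * \<gamma> * gb = minv n g * (\<gamma> * gb)"
      by (rule assoc_mult_mat[of _ n n _ n _ n]) (use gg GG gbb in auto)
    have "minv n gb * (mbar \<sigma> \<gamma> * g) * (minv n g * (\<gamma> * gb))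
        = minv n gb * ((mbar \<sigma> \<gamma> * g) * (minv n g * (\<gamma> * gb)))"
      by (rule assoc_mult_mat[of _ n n _ n _ n]) (use gbb c1 in auto)
    also have "(mbar \<sigma> \<gamma> * g) * (minv n g * (\<gamma> * gb)) = mbar \<sigma> \<gamma> * (g * (minv n g * (\<gamma> * gb)))"
      by (rule assoc_mult_mat[of _ n n _ n _ n]) (use gg c1 cbar in auto)
    also have "g * (minv n g * (\<gamma> * gb)) = \<gamma> * gb" by (rule GL_cancel(1)[OF g c1(1)])
    also have "mbar \<sigma> \<gamma> * (\<gamma> * gb) = (mbar \<sigma> \<gamma> * \<gamma>) * gb"
      by (rule assoc_mult_mat[symmetric, of _ n n _ n _ n]) (use GG gbb cbar in auto)
    also have "minv n gb * ((mbar \<sigma> \<gamma> * \<gamma>) * gb) = minv n gb * (mbar \<sigma> \<gamma> * \<gamma>) * gb"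
      by (rule assoc_mult_mat[symmetric, of _ n n _ n _ n]) (use gbb c1 in auto)
    finally show ?thesis unfolding mK unfolding K1_def unfolding e1 e2 .
  qed
  moreover have "mbar \<sigma> K1 * K1 \<in> GL_over n Oi"
    using GLO_mult[OF mbar_GLO[OF kK] kK] .
  ultimately have "minv n gb * (mbar \<sigma> \<gamma> * \<gamma>) * gb \<in> GL_over n Oi" by simp
  from part1[OF G K gbG this] have g1: "minv n gb * \<gamma> * gb \<in> GL_over n Oi" .
  have mi1: "minv n (minv n gb * \<gamma> * gb) = minv n gb * (minv n \<gamma> * gb)"
  proof -
    have "minv n (minv n gb * \<gamma> * gb) = minv n gb * minv n (minv n gb * \<gamma>)"
      using GL_mult(2)[OF GL_mult(1)[OF minv_GL(1)[OF gbG] G] gbG] .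
    also have "minv n (minv n gb * \<gamma>) = minv n \<gamma> * gb"
      using GL_mult(2)[OF minv_GL(1)[OF gbG] G] minv_GL(2)[OF gbG] by simp
    finally show ?thesis .
  qed
  define c where "c = minv n g * gb"
  have "K1 * minv n (minv n gb * \<gamma> * gb) = (minv n g * \<gamma> * gb) * (minv n gb * (minv n \<gamma> * gb))"
    unfolding mi1 K1_def ..
  also have "\<dots> = (minv n g * \<gamma>) * (gb * (minv n gb * (minv n \<gamma> * gb)))"
    by (rule assoc_mult_mat[of _ n n _ n _ n]) (use gg GG gbb in auto)
  also have "gb * (minv n gb * (minv n \<gamma> * gb)) = minv n \<gamma> * gb"
    by (rule GL_cancel(1)[OF gbG]) (use GG gbb in auto)
  also have "(minv n g * \<gamma>) * (minv n \<gamma> * gb) = minv n g * (\<gamma> * (minv n \<gamma> * gb))"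
    by (rule assoc_mult_mat[of _ n n _ n _ n]) (use gg GG gbb in auto)
  also have "\<gamma> * (minv n \<gamma> * gb) = gb"
    by (rule GL_cancel(1)[OF G]) (use gbb in auto)
  finally have "K1 * minv n (minv n gb * \<gamma> * gb) = c" unfolding c_def .
  hence cO: "c \<in> GL_over n Oi" using GLO_mult[OF kK GLO_minv[OF g1]] by simp
  have mc': "mbar \<sigma> c = minv n gb * g" unfolding c_def
    using mbar_mult[OF gg(2) gbb(1)] mgb gbar by simp
  have "c * mbar \<sigma> c = minv n g * (gb * (minv n gb * g))" unfolding mc' unfolding c_def
    by (rule assoc_mult_mat[of _ n n _ n _ n]) (use gg gbb in auto)
  also have "gb * (minv n gb * g) = g" by (rule GL_cancel(1)[OF gbG]) (use gg in auto)
  finally have c1: "c * mbar \<sigma> c = 1\<^sub>m n" using gg by simp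
  obtain \<alpha> where al: "\<alpha> \<in> Oi" "un (\<alpha> - \<sigma> \<alpha>)" using alpha_exists by auto
  obtain b where bO: "b \<in> GL_over n Oi" and cb: "c * mbar \<sigma> b = b" using hilbert90[OF al cO c1] by auto
  have bG: "b \<in> GL n" using GLO_GL[OF bO] .
  note bb = GL_D[OF bG]
  have mbC: "mbar \<sigma> b \<in> carrier_mat n n" using mbar_carrier[OF bb(1)] .
  define a where "a = g * b"
  have aG: "a \<in> GL n" unfolding a_def using GL_mult(1)[OF g bG] .
  note aa = GL_D[OF aG]
  have "a = g * (c * mbar \<sigma> b)" unfolding a_def cb ..
  also have "\<dots> = g * (minv n g * (gb * mbar \<sigma> b))" unfolding c_def
    by (subst assoc_mult_mat[of _ n n _ n _ n]) (use gg gbb mbC in auto)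
  also have "\<dots> = gb * mbar \<sigma> b" by (rule GL_cancel(1)[OF g]) (use gbb mbC in auto)
  also have "\<dots> = mbar \<sigma> a" unfolding a_def gb_def using mbar_mult[OF gg(1) bb(1)] by simp
  finally have afix: "mbar \<sigma> a = a" by simp
  have "mbar \<sigma> (minv n a) = minv n a" using mbar_GL(2)[OF aG] afix by simp
  hence aF: "a \<in> GL_over n (fixed_field \<sigma>)" unfolding GL_over_def
    using aG afix fixed_entry[OF aa(1)] fixed_entry[OF aa(2)] by auto
  have "a * minv n b = g * (b * minv n b)" unfolding a_def
    by (rule assoc_mult_mat[of _ n n _ n _ n]) (use gg bb in auto)
  hence "a * minv n b = g" using gg bb by simp
  thus ?thesis using aF GLO_minv[OF bO] by metis
qed

end

theorem mainTheorem8: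
  fixes v :: "'e::field_char_0 \<Rightarrow> int" and \<sigma> :: "'e \<Rightarrow> 'e"
    and n :: nat and \<beta> \<gamma> \<zeta> :: "'e mat"
  assumes ext: "unram_quad_ext v \<sigma>"
    and beta: "\<beta> \<in> GL n" "skew_hermitian \<sigma> \<beta>"
    and gamma: "\<gamma> \<in> GL n" "normal_mat n \<sigma> \<gamma>" "kottwitz n v \<sigma> \<gamma>"
      "regular_semisimple (mbar \<sigma> \<gamma> * \<gamma>)"
    and zeta: "\<zeta> \<in> GL n" "kottwitz_wrt n v \<sigma> \<beta> \<zeta>"
  shows "(\<forall>g\<in>GL n. minv n g * (mbar \<sigma> \<gamma> * \<gamma>) * g \<in> GL_over n (Ointeg v)
            \<longrightarrow> minv n g * \<gamma> * g \<in> GL_over n (Ointeg v))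
       \<and> (\<forall>g\<in>GL n. minv n g * \<gamma> * mbar \<sigma> g \<in> GL_over n (Ointeg v)
            \<longrightarrow> (\<exists>a\<in>GL_over n (fixed_field \<sigma>). \<exists>b\<in>GL_over n (Ointeg v). g = a * b))
       \<and> (\<forall>h\<in>unitary_group n \<sigma> \<beta>.
            minv n h * (minv n \<beta> * mstar \<sigma> \<zeta> * \<beta> * \<zeta>) * h \<in> GL_over n (Ointeg v)
            \<longrightarrow> minv n h * \<zeta> * h \<in> GL_over n (Ointeg v))"
proof -
  interpret vset v \<sigma> by unfold_locales (rule ext)
  show ?thesis
  proof (intro conjI ballI impI)
    fix g assume "g \<in> GL n" "minv n g * (mbar \<sigma> \<gamma> * \<gamma>) * g \<in> GL_over n (Ointeg v)"
    thus "minv n g * \<gamma> * g \<in> GL_over n (Ointeg v)" by (rule part1[OF gamma(1) gamma(3)])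
  next
    fix g assume "g \<in> GL n" "minv n g * \<gamma> * mbar \<sigma> g \<in> GL_over n (Ointeg v)"
    thus "\<exists>a\<in>GL_over n (fixed_field \<sigma>). \<exists>b\<in>GL_over n (Ointeg v). g = a * b"
      by (rule part2[OF gamma(1) gamma(3)])
  next
    fix h assume "h \<in> unitary_group n \<sigma> \<beta>"
      "minv n h * (minv n \<beta> * mstar \<sigma> \<zeta> * \<beta> * \<zeta>) * h \<in> GL_over n (Ointeg v)"
    thus "minv n h * \<zeta> * h \<in> GL_over n (Ointeg v)" by (rule part3[OF beta(1) zeta(1) zeta(2)])
  qed
qed

end
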